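(* Let $P_0$ be a domain, $U$ a free $P_0$-module of rank four with dual $U^*=\operatorname{Hom}_{P_0}(U,P_0)$, and $x,y,z,w$ a basis of $U$ with dual basis $x^*,y^*,z^*,w^*$. Let $$\phi_3=ax^{*(2)}y^*+dx^*y^{*(2)}+ey^{*(2)}z^*+fy^{*(2)}w^*+hy^*z^{*(2)}+iz^{*(2)}w^*+ky^*w^{*(2)}+mx^*y^*z^*+nx^*y^*w^*+py^*z^*w^*\in D_3U^*$$ with parameters in $P_0$. Assume (a) $a\neq0$ in $P_0$, and (b) $\ell\phi_3\neq0$ for all nonzero $\ell\in U$. Then $\Gamma_{\phi_3}$ is not identically zero.
   Context: $D_iU^*=\operatorname{Hom}_{P_0}(\operatorname{Sym}_iU,P_0)$; $D_\bullet U^*$ is the divided power algebra, a module over $\operatorname{Sym}_\bullet U$ via $(uv)(u')=v(uu')$. The divided power monomial $x^{*(a_1)}y^{*(a_2)}z^{*(a_3)}w^{*(a_4)}$ takes value $1$ on $x^{a_1}y^{a_2}z^{a_3}w^{a_4}$ and $0$ on all other monomials of that degree; a factor without parenthesized exponent has exponent one. $D_4U$ is the degree-$4$ divided power of $U$. For $X\in D_4U$, $\Delta(X)\in U^{\otimes4}$ is its comultiplication: for $X=\ell_1^{(e_1)}\cdots\ell_s^{(e_s)}$ with $\sum e_j=4$, the sum of all distinct words $u_1\otimes\cdots\otimes u_4$ in which the symbol $\ell_j$ occurs exactly $e_j$ times, extended linearly. $\Gamma_{\phi_3}:D_4U\otimes\bigwedge^4U\to\bigwedge^4U^*$ is the $P_0$-linear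 map $\Gamma_{\phi_3}(X\otimes y_1\wedge\cdots\wedge y_4)=\sum(u_1y_1\phi_3)\wedge\cdots\wedge(u_4y_4\phi_3)$, summed over the terms of $\Delta(X)$. *)

theory Defs
  imports Main "HOL-Library.Multiset" "HOL-Combinatorics.Permutations"
begin

text \<open>U is free of rank 4 with basis x,y,z,w, indexed by 0,1,2,3.
  An element of U (resp. U^*) is given by its coordinates, a function nat => 'a
  of which only the values at 0..3 matter. A monomial of degree k in Sym_k U
  (resp. in D_k U) is a multiset of size k over {0..<4}. An element of
  D_k U^* = Hom(Sym_k U, P0) is given by its values on the monomials of degree k.\<close>

definition monoms :: "nat \<Rightarrow> nat multiset set" where
  "monoms k = {M. size M = k \<and> set_mset M \<subseteq> {..<4}}"

definition phi3 :: "'a::zero \<Rightarrow> 'a \<Rightarrow> 'a \<Rightarrow> 'a \<Rightarrow> 'a \<Rightarrow> 'a \<Rightarrow> 'a \<Rightarrow> 'a \<Rightarrow> 'a \<Rightarrow> 'a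
      \<Rightarrow> nat multiset \<Rightarrow> 'a" where
  "phi3 a d e f h i k m n p M =
     (if M = {#0,0,1#} then a
      else if M = {#0,1,1#} then d
      else if M = {#1,1,2#} then e
      else if M = {#1,1,3#} then f
      else if M = {#1,2,2#} then h
      else if M = {#2,2,3#} then i
      else if M = {#1,3,3#} then k
      else if M = {#0,1,2#} then m
      else if M = {#0,1,3#} then n
      else if M = {#1,2,3#} then p
      else 0)"

text \<open>Module action of U on the divided power algebra: (l phi)(M) = phi(l M).\<close>
definition act :: "(nat \<Rightarrow> 'a::comm_ring_1) \<Rightarrow> (nat multiset \<Rightarrow> 'a) \<Rightarrow> nat multiset \<Rightarrow> 'a" where
  "act l phi M = (\<Sum>i<4. l i * phi (add_mset i M))"

text \<open>The covector (u y phi) in D_1 U^* = U^*, as coordinates on the basis of U.\<close>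
definition covec :: "(nat multiset \<Rightarrow> 'a::comm_ring_1) \<Rightarrow> (nat \<Rightarrow> 'a) \<Rightarrow> (nat \<Rightarrow> 'a) \<Rightarrow> nat \<Rightarrow> 'a" where
  "covec phi u y j = act u (act y phi) {#j#}"

text \<open>Coefficient of v_0 \<and> v_1 \<and> v_2 \<and> v_3 on x^* \<and> y^* \<and> z^* \<and> w^* in the wedge power of U^*.\<close>
definition wedge4 :: "(nat \<Rightarrow> nat \<Rightarrow> 'a::comm_ring_1) \<Rightarrow> 'a" where
  "wedge4 v = (\<Sum>q | q permutes {..<4}. of_int (sign q) * (\<Prod>r<4. v r (q r)))"

definition basisU :: "nat \<Rightarrow> nat \<Rightarrow> 'a::zero_neq_one" where
  "basisU j = (\<lambda>i. if i = j then 1 else 0)"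

text \<open>Gamma_phi(X \<otimes> y_0 \<and> ... \<and> y_3), as coefficient of x^*\<and>y^*\<and>z^*\<and>w^*,
  where X = sum of c M times the divided power monomial M, and the
  comultiplication of a divided power monomial M is the sum of all distinct
  words ws with mset ws = M.\<close>
definition Gamma :: "(nat multiset \<Rightarrow> 'a::comm_ring_1) \<Rightarrow> (nat multiset \<Rightarrow> 'a)
      \<Rightarrow> (nat \<Rightarrow> nat \<Rightarrow> 'a) \<Rightarrow> 'a" where
  "Gamma phi c ys =
     (\<Sum>M\<in>monoms 4. c M * (\<Sum>ws\<in>{ws. mset ws = M}.
         wedge4 (\<lambda>r. covec phi (basisU (ws ! r)) (ys r))))"

end

theory Submission imports Defs "HOL-Combinatorics.Multiset_Permutations" begin

lemma perm_sum4:
  "(\<Sum>q | q permutes {..<4::nat}. g q) =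
   (\<Sum>b0\<in>{0,1,2,3}. \<Sum>b1\<in>{1,2,3}. \<Sum>b2\<in>{2,3}.
      g (transpose 0 b0 \<circ> (transpose 1 b1 \<circ> (transpose 2 b2 \<circ> (transpose 3 3 \<circ> id)))))"
proof -
  have e: "{..<4::nat} = insert 0 (insert 1 (insert 2 (insert 3 {})))" by auto
  have p: "{p. p permutes ({}::nat set)} = {id}" by (auto simp: permutes_empty)
  show ?thesis unfolding e
    apply (subst sum_over_permutations_insert, simp, simp)
    apply (subst sum_over_permutations_insert, simp, simp)
    apply (subst sum_over_permutations_insert, simp, simp)
    apply (subst sum_over_permutations_insert, simp, simp)
    apply (simp add: p)
    done
qed

lemma prod4: "(\<Prod>r<4::nat. f r) = f 0 * f 1 * f 2 * (f 3::'a::comm_monoid_mult)"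
  by (simp add: eval_nat_numeral mult_ac)

lemma sum4: "(\<Sum>r<4::nat. f r) = f 0 + f 1 + f 2 + (f 3::'a::comm_monoid_add)"
  by (simp add: eval_nat_numeral add_ac)

lemma wedge4_explicit:
  "wedge4 v = v 0 0 * v 1 1 * v 2 2 * v 3 3 - v 0 0 * v 1 1 * v 2 3 * v 3 2 - v 0 0 * v 1 2 * v 2 1 * v 3 3 + v 0 0 * v 1 2 * v 2 3 * v 3 1 + v 0 0 * v 1 3 * v 2 1 * v 3 2 - v 0 0 * v 1 3 * v 2 2 * v 3 1 - v 0 1 * v 1 0 * v 2 2 * v 3 3 + v 0 1 * v 1 0 * v 2 3 * v 3 2 + v 0 1 * v 1 2 * v 2 0 * v 3 3 - v 0 1 * v 1 2 * v 2 3 * v 3 0 - v 0 1 * v 1 3 * v 2 0 * v 3 2 + v 0 1 * v 1 3 * v 2 2 * v 3 0 + v 0 2 * v 1 0 * v 2 1 * v 3 3 - v 0 2 * v 1 0 * v 2 3 * v 3 1 - v 0 2 * v 1 1 * v 2 0 * v 3 3 + v 0 2 * v 1 1 * v 2 3 * v 3 0 + v 0 2 * v 1 3 * v 2 0 * v 3 1 - v 0 2 * v 1 3 * v 2 1 * v 3 0 - v 0 3 * v 1 0 * v 2 1 * v 3 2 + v 0 3 * v 1 0 * v 2 2 * v 3 1 + v 0 3 * v 1 1 * v 2 0 * v 3 2 - v 0 3 * v 1 1 * v 2 2 * v 3 0 - v 0 3 * v 1 2 * v 2 0 * v 3 1 + v 0 3 * v 1 2 * v 2 1 * v 3 0"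
  unfolding wedge4_def perm_sum4 prod4
  by (simp add: sign_compose sign_swap_id permutation_swap_id permutation_compose transpose_def algebra_simps)
lemma mseq: "(M::nat multiset) = N \<longleftrightarrow> sorted_list_of_multiset M = sorted_list_of_multiset N"
  by (metis mset_sorted_list_of_multiset)

lemma finite_monoms: "finite (monoms k)"
proof -
  have "monoms k = multisets_of_size {..<4} k" by (auto simp: monoms_def multisets_of_size_def)
  thus ?thesis by auto
qed

lemma ifmul: "(if b then 1 else 0) * (x::'a::comm_ring_1) = (if b then x else 0)" by simp

lemma Gamma_ind:
  assumes "M0 \<in> monoms 4"
  shows "Gamma phi (\<lambda>M. if M = M0 then 1 else 0) ys =
     (\<Sum>ws\<in>permutations_of_multiset M0. wedge4 (\<lambda>r. covec phi (basisU (ws ! r)) (ys r)))"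
  unfolding Gamma_def permutations_of_multiset_def using assms finite_monoms[of 4]
  by (simp add: ifmul)

lemma covec_basis:
  assumes "s < 4" "t < 4"
  shows "covec phi (basisU s) (basisU t) j = phi (add_mset t (add_mset s {#j#}))"
  using assms unfolding covec_def act_def basisU_def
  by (simp add: ifmul)
lemma len4: "length ws = 4 \<Longrightarrow> \<exists>a b c d. ws = [a,b,c,d]"
  by (cases ws; cases "tl ws"; cases "tl (tl ws)"; cases "tl (tl (tl ws))"; cases "tl (tl (tl (tl ws)))") auto

lemma P0022: "permutations_of_multiset {#0,0,2,2::nat#} = {[0,0,2,2],[0,2,0,2],[0,2,2,0],[2,0,0,2],[2,0,2,0],[2,2,0,0]}"
proof (rule set_eqI, rule iffI)
  fix ws assume "ws \<in> permutations_of_multiset {#0,0,2,2::nat#}"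
  hence m: "mset ws = {#0,0,2,2#}" by (simp add: permutations_of_multiset_def)
  have "length ws = size (mset ws)" by simp
  hence "length ws = 4" using m by simp
  then obtain a b c d where ws: "ws = [a,b,c,d]" using len4 by blast
  have "set ws = set_mset {#0,0,2,2::nat#}" using m by (metis set_mset_mset)
  hence abcd: "a \<in> {0,2}" "b \<in> {0,2}" "c \<in> {0,2}" "d \<in> {0,2}" using ws by auto
  show "ws \<in> {[0,0,2,2],[0,2,0,2],[0,2,2,0],[2,0,0,2],[2,0,2,0],[2,2,0,0]}"
    using m abcd unfolding ws by (auto simp: mseq)
qed (auto simp: permutations_of_multiset_def mseq)
lemma P0011: "permutations_of_multiset {#0,0,1,1::nat#} = {[0,0,1,1],[0,1,0,1],[0,1,1,0],[1,0,0,1],[1,0,1,0],[1,1,0,0]}"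
proof (rule set_eqI, rule iffI)
  fix ws assume "ws \<in> permutations_of_multiset {#0,0,1,1::nat#}"
  hence m: "mset ws = {#0,0,1,1#}" by (simp add: permutations_of_multiset_def)
  have "length ws = size (mset ws)" by simp
  hence "length ws = 4" using m by simp
  then obtain a b c d where ws: "ws = [a,b,c,d]" using len4 by blast
  have "set ws = set_mset {#0,0,1,1::nat#}" using m by (metis set_mset_mset)
  hence abcd: "a \<in> {0,1}" "b \<in> {0,1}" "c \<in> {0,1}" "d \<in> {0,1}" using ws by auto
  show "ws \<in> {[0,0,1,1],[0,1,0,1],[0,1,1,0],[1,0,0,1],[1,0,1,0],[1,1,0,0]}"
    using m abcd unfolding ws by (auto simp: mseq)
qed (auto simp: permutations_of_multiset_def mseq)
lemma P1111: "permutations_of_multiset {#1,1,1,1::nat#} = {[1,1,1,1]}"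
  by (simp add: permutations_of_multiset_nonempty)

lemma G1:
  fixes a d e f h i k m n p :: "'a::idom"
  shows "Gamma (phi3 a d e f h i k m n p) (\<lambda>M. if M = {#0,0,2,2#} then 1 else 0) (\<lambda>r. basisU r) = a^2*i^2"
  apply (subst Gamma_ind)
   apply (simp add: monoms_def)
  apply (simp only: P0022)
  apply (simp add: wedge4_explicit covec_basis)
  apply (simp add: phi3_def mseq power2_eq_square algebra_simps)
  done

lemma G2:
  fixes a d e f h i k m n p :: "'a::idom"
  shows "Gamma (phi3 a d e f h i k m n p) (\<lambda>M. if M = {#0,0,1,1#} then 1 else 0) (\<lambda>r. basisU r) =
    a * (a*p^2 - a*h*k + k*m^2 - 2*m*n*p + h*n^2)"
  apply (subst Gamma_ind)
   apply (simp add: monoms_def)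
  apply (simp only: P0011)
  apply (simp add: wedge4_explicit covec_basis)
  apply (simp add: phi3_def mseq power2_eq_square algebra_simps)
  done

lemma G3:
  fixes a d e f h i k m n p :: "'a::idom"
  shows "Gamma (phi3 a d e f h i k m n p) (\<lambda>M. if M = {#1,1,1,1#} then 1 else 0) (\<lambda>r. basisU r) =
    - a*e^2*k + 2*a*e*f*p - a*f^2*h - d^2*h*k + d^2*p^2 + 2*d*e*k*m - 2*d*e*n*p - 2*d*f*m*p + 2*d*f*h*n + f^2*m^2 - 2*e*f*m*n + e^2*n^2"
  apply (subst Gamma_ind)
   apply (simp add: monoms_def)
  apply (simp only: P1111)
  apply (simp add: wedge4_explicit covec_basis)
  apply (simp add: phi3_def mseq power2_eq_square algebra_simps)
  done


lemma monoms2: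
  assumes "M \<in> monoms 2"
  shows "\<exists>x y. M = {#x,y#} \<and> x < 4 \<and> y < 4"
proof -
  let ?L = "sorted_list_of_multiset M"
  have sz: "size M = 2" and st: "set_mset M \<subseteq> {..<4}" using assms by (auto simp: monoms_def)
  have "length ?L = size (mset ?L)" by (metis size_mset)
  hence "length ?L = 2" using sz by simp
  then obtain x y where L: "?L = [x,y]"
    by (cases ?L; cases "tl ?L"; cases "tl (tl ?L)") auto
  have "M = mset ?L" by simp
  hence M: "M = {#x,y#}" using L by simp
  show ?thesis using M st by auto
qed

lemma kill:
  fixes a d e f h i k m n p l0 l2 l3 :: "'a::idom"
  assumes "i = 0" and nz: "l0 \<noteq> 0 \<or> l2 \<noteq> 0 \<or> l3 \<noteq> 0"
  and r0: "a*l0 + m*l2 + n*l3 = 0" and r1: "m*l0 + h*l2 + p*l3 = 0" and r2: "n*l0 + p*l2 + k*l3 = 0"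
  and rw: "d*l0 + e*l2 + f*l3 = 0"
  shows "\<exists>l::nat\<Rightarrow>'a. (\<exists>j<4. l j \<noteq> 0) \<and> (\<forall>M\<in>monoms 2. act l (phi3 a d e f h i k m n p) M = 0)"
proof (rule exI[of _ "\<lambda>j::nat. if j = 0 then l0 else if j = 2 then l2 else if j = 3 then l3 else 0"], rule conjI)
  let ?l = "\<lambda>j::nat. if j = 0 then l0 else if j = 2 then l2 else if j = 3 then l3 else 0"
  show "\<exists>j<4. ?l j \<noteq> 0" using nz
    apply (elim disjE)
      apply (rule exI[of _ 0], simp)
     apply (rule exI[of _ 2], simp)
    apply (rule exI[of _ 3], simp)
    done
  show "\<forall>M\<in>monoms 2. act ?l (phi3 a d e f h i k m n p) M = 0"
  proof
    fix M assume "M \<in> monoms 2"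
    then obtain x y where M: "M = {#x,y#}" "x < 4" "y < 4" using monoms2 by blast
    have x: "x = 0 \<or> x = 1 \<or> x = 2 \<or> x = 3" and y: "y = 0 \<or> y = 1 \<or> y = 2 \<or> y = 3"
      using M by auto
    show "act ?l (phi3 a d e f h i k m n p) M = 0"
      using x y assms unfolding M act_def sum4
      by (auto simp: phi3_def mseq algebra_simps)
  qed
qed


lemma kernel:
  fixes a d e f h k m n p :: "'a::idom"
  assumes ha: "a \<noteq> 0" and Q: "a*p^2 - a*h*k + k*m^2 - 2*m*n*p + h*n^2 = 0" and R: "- a*e^2*k + 2*a*e*f*p - a*f^2*h - d^2*h*k + d^2*p^2 + 2*d*e*k*m - 2*d*e*n*p - 2*d*f*m*p + 2*d*f*h*n + f^2*m^2 - 2*e*f*m*n + e^2*n^2 = 0"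
  shows "\<exists>l0 l2 l3. (l0 \<noteq> 0 \<or> l2 \<noteq> 0 \<or> l3 \<noteq> 0) \<and>
      a*l0 + m*l2 + n*l3 = 0 \<and> m*l0 + h*l2 + p*l3 = 0 \<and> n*l0 + p*l2 + k*l3 = 0 \<and> d*l0 + e*l2 + f*l3 = 0"
proof -
  consider (c0) "(h*k - p^2) \<noteq> 0 \<or> (n*p - m*k) \<noteq> 0 \<or> (m*p - h*n) \<noteq> 0"
    | (c1) "(n*p - m*k) \<noteq> 0 \<or> (a*k - n^2) \<noteq> 0 \<or> (m*n - a*p) \<noteq> 0"
    | (c2) "(m*p - h*n) \<noteq> 0 \<or> (m*n - a*p) \<noteq> 0 \<or> (a*h - m^2) \<noteq> 0"
    | (z) "(h*k - p^2) = 0" "(n*p - m*k) = 0" "(m*p - h*n) = 0" "(a*k - n^2) = 0" "(m*n - a*p) = 0" "(a*h - m^2) = 0" by blast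
  then show ?thesis
  proof cases
  case c0
    have sq: "(d*(h*k - p^2) + e*(n*p - m*k) + f*(m*p - h*n))^2 = 0" using Q R by algebra
    have "d*(h*k - p^2) + e*(n*p - m*k) + f*(m*p - h*n) = 0" using sq by simp
    moreover have "a*(h*k - p^2) + m*(n*p - m*k) + n*(m*p - h*n) = 0" using Q by algebra
    moreover have "m*(h*k - p^2) + h*(n*p - m*k) + p*(m*p - h*n) = 0" by (simp add: algebra_simps power2_eq_square)
    moreover have "n*(h*k - p^2) + p*(n*p - m*k) + k*(m*p - h*n) = 0" by (simp add: algebra_simps power2_eq_square)
    ultimately show ?thesis using c0 by blast
  next
  case c1
    have sq: "(d*(n*p - m*k) + e*(a*k - n^2) + f*(m*n - a*p))^2 = 0" using Q R by algebra
    have "d*(n*p - m*k) + e*(a*k - n^2) + f*(m*n - a*p) = 0" using sq by simp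
    moreover have "a*(n*p - m*k) + m*(a*k - n^2) + n*(m*n - a*p) = 0" by (simp add: algebra_simps power2_eq_square)
    moreover have "m*(n*p - m*k) + h*(a*k - n^2) + p*(m*n - a*p) = 0" using Q by algebra
    moreover have "n*(n*p - m*k) + p*(a*k - n^2) + k*(m*n - a*p) = 0" by (simp add: algebra_simps power2_eq_square)
    ultimately show ?thesis using c1 by blast
  next
  case c2
    have sq: "(d*(m*p - h*n) + e*(m*n - a*p) + f*(a*h - m^2))^2 = 0" using Q R by algebra
    have "d*(m*p - h*n) + e*(m*n - a*p) + f*(a*h - m^2) = 0" using sq by simp
    moreover have "a*(m*p - h*n) + m*(m*n - a*p) + n*(a*h - m^2) = 0" by (simp add: algebra_simps power2_eq_square)
    moreover have "m*(m*p - h*n) + h*(m*n - a*p) + p*(a*h - m^2) = 0" by (simp add: algebra_simps power2_eq_square)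
    moreover have "n*(m*p - h*n) + p*(m*n - a*p) + k*(a*h - m^2) = 0" using Q by algebra
    ultimately show ?thesis using c2 by blast
  next
    case z
    show ?thesis
    proof (cases "(m*f - n*e) \<noteq> 0 \<or> (n*d - a*f) \<noteq> 0 \<or> (a*e - m*d) \<noteq> 0")
      case True
      have "a * (m*(m*f - n*e) + h*(n*d - a*f) + p*(a*e - m*d)) = 0" using z by algebra
      hence "m*(m*f - n*e) + h*(n*d - a*f) + p*(a*e - m*d) = 0" using ha by simp
      moreover have "a * (n*(m*f - n*e) + p*(n*d - a*f) + k*(a*e - m*d)) = 0" using z by algebra
      hence "n*(m*f - n*e) + p*(n*d - a*f) + k*(a*e - m*d) = 0" using ha by simp
      moreover have "a*(m*f - n*e) + m*(n*d - a*f) + n*(a*e - m*d) = 0" by algebra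
      moreover have "d*(m*f - n*e) + e*(n*d - a*f) + f*(a*e - m*d) = 0" by algebra
      ultimately show ?thesis using True by blast
    next
      case False
      hence "a*e - m*d = 0" by simp
      hence "d*(-m) + e*a + f*0 = 0" by (simp add: algebra_simps)
      moreover have "a*(-m) + m*a + n*0 = 0" by simp
      moreover have "m*(-m) + h*a + p*0 = 0" using z by (simp add: algebra_simps power2_eq_square)
      moreover have "n*(-m) + p*a + k*0 = 0" using z by (simp add: algebra_simps)
      ultimately show ?thesis using ha by blast
    qed
  qed
qed


theorem proposition7p1:
  fixes a d e f h i k m n p :: "'a::idom"
  assumes ha: "a \<noteq> 0"
    and hb: "\<forall>l::nat \<Rightarrow> 'a. (\<exists>j<4. l j \<noteq> 0) \<longrightarrow>
               (\<exists>M\<in>monoms 2. act l (phi3 a d e f h i k m n p) M \<noteq> 0)"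
  shows "\<exists>(c::nat multiset \<Rightarrow> 'a) (ys::nat \<Rightarrow> nat \<Rightarrow> 'a).
           Gamma (phi3 a d e f h i k m n p) c ys \<noteq> 0"
proof (rule ccontr)
  assume "\<not> ?thesis"
  hence H: "\<And>c ys. Gamma (phi3 a d e f h i k m n p) c ys = 0" by blast
  have "a^2*i^2 = 0" using H G1 by metis
  hence i0: "i = 0" using ha by simp
  have "a * (a*p^2 - a*h*k + k*m^2 - 2*m*n*p + h*n^2) = 0" using H G2 by metis
  hence Q: "a*p^2 - a*h*k + k*m^2 - 2*m*n*p + h*n^2 = 0" using ha by simp
  have R: "- a*e^2*k + 2*a*e*f*p - a*f^2*h - d^2*h*k + d^2*p^2 + 2*d*e*k*m - 2*d*e*n*p - 2*d*f*m*p + 2*d*f*h*n + f^2*m^2 - 2*e*f*m*n + e^2*n^2 = 0" using H G3 by metis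
  obtain l0 l2 l3 where "(l0 \<noteq> 0 \<or> l2 \<noteq> 0 \<or> l3 \<noteq> 0)"
     "a*l0 + m*l2 + n*l3 = 0" "m*l0 + h*l2 + p*l3 = 0" "n*l0 + p*l2 + k*l3 = 0" "d*l0 + e*l2 + f*l3 = 0"
    using kernel[OF ha Q R] by blast
  from kill[OF i0 this] obtain l :: "nat \<Rightarrow> 'a" where
    "\<exists>j<4. l j \<noteq> 0" "\<forall>M\<in>monoms 2. act l (phi3 a d e f h i k m n p) M = 0" by blast
  thus False using hb by blast
qed

end
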